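(* Let $S$ be a nonempty product-free set of positive integers (i.e. there are no $a,b,c\in S$, not necessarily distinct, with $ab=c$), and let $a$ be the least element of $S$. Then the upper asymptotic density of $S$ satisfies $$ \limsup_{x\to\infty}\frac{|S\cap[1,x]|}{x} \le 1-\frac{1}{2a}. $$ More precisely, $|S\cap[1,x]|\le x-\frac12\lfloor x/a\rfloor$ for every real $x\ge a$. *)

theory Defs
  imports "HOL-Analysis.Analysis"
begin

definition product_free :: "nat set \<Rightarrow> bool" where
  "product_free S \<longleftrightarrow> (\<forall>a\<in>S. \<forall>b\<in>S. \<forall>c\<in>S. a * b \<noteq> c)"

definition count_upto :: "nat set \<Rightarrow> real \<Rightarrow> nat" where
  "count_upto S x = card {n\<in>S. 1 \<le> n \<and> real n \<le> x}"

end

theory Submission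
  imports Defs "HOL-Real_Asymp.Real_Asymp"
begin

lemma key:
  fixes S :: "nat set" and n m a :: nat
  assumes aS: "a \<in> S" and a0: "a > 0" and pf: "product_free S" and ma: "m * a \<le> n"
  shows "2 * card {k\<in>S. 1 \<le> k \<and> k \<le> n} + m \<le> 2 * n"
proof -
  define M where "M = {1..n} - S"
  define T where "T = {k\<in>S. 1 \<le> k \<and> k \<le> n}"
  have mn: "m \<le> n" proof -
    have "m \<le> m * a" using a0 by simp
    thus ?thesis using ma by linarith
  qed
  have TM: "T \<union> M = {1..n}" "T \<inter> M = {}" unfolding T_def M_def by auto
  have cTM: "card T + card M = n"
    using card_Un_disjoint[of T M] TM by (simp add: M_def T_def)
  have K1: "{1..m} - S \<subseteq> M" using mn unfolding M_def by auto
  have K2: "(\<lambda>k. k * a) ` ({1..m} \<inter> S) \<subseteq> M"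
  proof
    fix y assume "y \<in> (\<lambda>k. k * a) ` ({1..m} \<inter> S)"
    then obtain k where k: "k \<in> {1..m}" "k \<in> S" "y = k * a" by auto
    have "k * a \<le> m * a" using k by auto
    hence "y \<le> n" using ma k by linarith
    moreover have "y \<ge> 1" using k a0 by simp
    moreover have "y \<notin> S" using pf k aS unfolding product_free_def by blast
    ultimately show "y \<in> M" unfolding M_def by auto
  qed
  have inj: "inj_on (\<lambda>k. k * a) ({1..m} \<inter> S)" using a0 by (auto simp: inj_on_def)
  have c1: "card ({1..m} - S) \<le> card M" using K1 by (intro card_mono) (auto simp: M_def)
  have c2: "card ({1..m} \<inter> S) \<le> card M"
    using card_mono[OF _ K2] card_image[OF inj] by (auto simp: M_def)
  have "m = card ({1..m} - S) + card ({1..m} \<inter> S)"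
  proof -
    have "{1..m} = ({1..m} - S) \<union> ({1..m} \<inter> S)" by auto
    hence "card {1..m} = card ({1..m} - S) + card ({1..m} \<inter> S)"
      by (metis card_Un_disjoint finite_Diff finite_Int finite_atLeastAtMost Diff_disjoint Int_Diff_disjoint inf_commute)
    thus ?thesis by simp
  qed
  thus ?thesis using c1 c2 cTM unfolding T_def by linarith
qed

lemma count_bound:
  fixes S :: "nat set" and a :: nat and x :: real
  assumes aS: "a \<in> S" and a0: "a > 0" and pf: "product_free S" and x0: "x \<ge> 0"
  shows "real (count_upto S x) \<le> x - (1/2) * real_of_int \<lfloor>x / real a\<rfloor>"
proof -
  define n where "n = nat \<lfloor>x\<rfloor>"
  define m where "m = nat \<lfloor>x / real a\<rfloor>"
  have set_eq: "{k\<in>S. 1 \<le> k \<and> real k \<le> x} = {k\<in>S. 1 \<le> k \<and> k \<le> n}"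
  proof -
    have "\<And>k::nat. real k \<le> x \<longleftrightarrow> k \<le> n"
    proof
      fix k :: nat
      show "real k \<le> x \<Longrightarrow> k \<le> n" unfolding n_def by (rule le_nat_floor)
      assume "k \<le> n"
      hence "int k \<le> \<lfloor>x\<rfloor>" unfolding n_def using x0 by linarith
      hence "real_of_int (int k) \<le> x" by (simp add: le_floor_iff)
      thus "real k \<le> x" by simp
    qed
    thus ?thesis by auto
  qed
  have fm: "real_of_int \<lfloor>x / real a\<rfloor> = real m" unfolding m_def using x0 a0 by simp
  have fn: "real n \<le> x" unfolding n_def using x0 by simp
  have "real m * real a \<le> x"
  proof -
    have "real m \<le> x / real a" using fm by (metis of_int_floor_le)
    thus ?thesis using a0 by (simp add: field_simps)
  qed
  hence "m * a \<le> n" unfolding n_def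
    by (metis le_nat_floor of_nat_mult)
  from key[OF aS a0 pf this]
  have "2 * card {k\<in>S. 1 \<le> k \<and> k \<le> n} + m \<le> 2 * n" .
  hence "2 * real (card {k\<in>S. 1 \<le> k \<and> k \<le> n}) + real m \<le> 2 * real n"
    by (metis of_nat_add of_nat_le_iff of_nat_mult of_nat_numeral)
  thus ?thesis unfolding count_upto_def set_eq fm using fn by linarith
qed

theorem mainTheorem6:
  fixes S :: "nat set"
  assumes "S \<noteq> {}" and "\<forall>n\<in>S. n > 0" and "product_free S"
  defines "a \<equiv> (LEAST n. n \<in> S)"
  shows "Limsup at_top (\<lambda>x::real. ereal (real (count_upto S x) / x))
           \<le> ereal (1 - 1 / (2 * real a))
         \<and> (\<forall>x::real. x \<ge> real a \<longrightarrow>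
           real (count_upto S x) \<le> x - (1/2) * real_of_int \<lfloor>x / real a\<rfloor>)"
proof -
  have aS: "a \<in> S" unfolding a_def using assms(1) by (metis LeastI ex_in_conv)
  have a0: "a > 0" using aS assms(2) by auto
  have cb: "\<And>x. x \<ge> 0 \<Longrightarrow> real (count_upto S x) \<le> x - (1/2) * real_of_int \<lfloor>x / real a\<rfloor>"
    using count_bound[OF aS a0 assms(3)] by blast
  have ev: "eventually (\<lambda>x::real. ereal (real (count_upto S x) / x)
      \<le> ereal (1 - 1 / (2 * real a) + 1 / (2 * x))) at_top"
    using eventually_gt_at_top[of 0]
  proof eventually_elim
    case (elim x)
    have f: "x / real a - 1 \<le> real_of_int \<lfloor>x / real a\<rfloor>" by linarith
    have "real (count_upto S x) \<le> x - (1/2) * real_of_int \<lfloor>x / real a\<rfloor>" using cb[of x] elim by simp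
    hence "real (count_upto S x) \<le> x - (1/2) * (x / real a - 1)" using mult_left_mono[OF f, of "1/2"] by linarith
    hence "real (count_upto S x) / x \<le> (x - (1/2) * (x / real a - 1)) / x"
      using elim by (intro divide_right_mono) auto
    also have "\<dots> = 1 - 1 / (2 * real a) + 1 / (2 * x)" using elim a0 by (simp add: field_simps)
    finally show ?case by simp
  qed
  have lim: "((\<lambda>x::real. ereal (1 - 1 / (2 * real a) + 1 / (2 * x))) \<longlongrightarrow> ereal (1 - 1 / (2 * real a))) at_top"
  proof -
    have "((\<lambda>x::real. 1 - 1 / (2 * real a) + 1 / (2 * x)) \<longlongrightarrow> 1 - 1 / (2 * real a) + 0) at_top"
      by (intro tendsto_intros) real_asymp
    thus ?thesis by (simp add: tendsto_ereal)
  qed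
  have "Limsup at_top (\<lambda>x::real. ereal (real (count_upto S x) / x))
      \<le> Limsup at_top (\<lambda>x::real. ereal (1 - 1 / (2 * real a) + 1 / (2 * x)))"
    by (rule Limsup_mono[OF ev])
  also have "\<dots> = ereal (1 - 1 / (2 * real a))"
    by (rule lim_imp_Limsup[OF _ lim]) simp
  finally show ?thesis using cb a0 by auto
qed

end
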